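(* Assume the standing hypotheses (H). Let $A$ be a part of $G$ with $|A|=3$, let $\{u,v\}\subseteq A$ be a good pair for $A$, and let $x$ be the third vertex of $A$. Then \[\bigl|L(x)\cup (L(u)\cap L(v))\bigr|\ \ge\ k+\frac{k_3}{3}+k_4 .\]
   Context: A list assignment $L$ assigns to each vertex $v$ a set $L(v)$ of colors; an $L$-coloring is a proper coloring $f$ with $f(v)\in L(v)$ for all $v$; $\mathrm{ch}$ denotes choice number and $\chi$ chromatic number. A part of a complete multipartite graph is one of its maximal stable sets. Standing hypotheses (H): $k\ge1$ and $n\ge 2k+2$ are integers; $G$ is a complete $k$-partite graph (exactly $k$ nonempty parts) on $n$ vertices; $L$ is a list assignment for $G$ with $|L(v)|\ge\lceil (n+k-1)/3\rceil$ for every vertex $v$; $G$ has no $L$-coloring; $\left|\bigcup_{v\in V(G)}L(v)\right|\le n-1$; and every graph $H$ with fewer than $n$ vertices satisfies $\mathrm{ch}(H)\le\max\{\chi(H),\lceil(|V(H)|+\chi(H)-1)/3\rceil\}$. For $i\in\{1,2,3,4\}$, $k_i$ denotes the number of parts of $G$ of size $i$. For a part $A$ with $|A|\ge3$, a pair $\{u,v\}\subseteq A$ of distinct vertices is a good pair for $A$ if either $|A|=3$ and $|L(u)\cap L(v)|\ge\frac{k_1+k_4+1}{3}$, or $|A|=4$ and $|L(u)\cap L(v)|\ge|L(w)\cap L(z)|$ where $\{w,z\}=A\setminus\{u,v\}$. *)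

theory Defs
  imports Complex_Main
begin

definition simple_graph :: "'v set \<Rightarrow> ('v \<Rightarrow> 'v \<Rightarrow> bool) \<Rightarrow> bool" where
  "simple_graph V E \<longleftrightarrow> finite V \<and>
     (\<forall>u v. E u v \<longrightarrow> u \<in> V \<and> v \<in> V \<and> u \<noteq> v \<and> E v u)"

definition proper_coloring :: "'v set \<Rightarrow> ('v \<Rightarrow> 'v \<Rightarrow> bool) \<Rightarrow> ('v \<Rightarrow> 'c) \<Rightarrow> bool" where
  "proper_coloring V E f \<longleftrightarrow> (\<forall>u\<in>V. \<forall>v\<in>V. E u v \<longrightarrow> f u \<noteq> f v)"

definition L_coloring :: "'v set \<Rightarrow> ('v \<Rightarrow> 'v \<Rightarrow> bool) \<Rightarrow> ('v \<Rightarrow> 'c set) \<Rightarrow> ('v \<Rightarrow> 'c) \<Rightarrow> bool" where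
  "L_coloring V E L f \<longleftrightarrow> proper_coloring V E f \<and> (\<forall>v\<in>V. f v \<in> L v)"

definition colorable :: "'v set \<Rightarrow> ('v \<Rightarrow> 'v \<Rightarrow> bool) \<Rightarrow> nat \<Rightarrow> bool" where
  "colorable V E m \<longleftrightarrow> (\<exists>f :: 'v \<Rightarrow> nat. proper_coloring V E f \<and> f ` V \<subseteq> {..<m})"

definition chromatic_number :: "'v set \<Rightarrow> ('v \<Rightarrow> 'v \<Rightarrow> bool) \<Rightarrow> nat" where
  "chromatic_number V E = (LEAST m. colorable V E m)"

text \<open>m-choosable: every assignment of (finite) lists of size at least m admits an L-coloring.
  Colors are taken from nat, which is no loss of generality (lists are finite).\<close>
definition choosable :: "'v set \<Rightarrow> ('v \<Rightarrow> 'v \<Rightarrow> bool) \<Rightarrow> nat \<Rightarrow> bool" where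
  "choosable V E m \<longleftrightarrow> (\<forall>L :: 'v \<Rightarrow> nat set.
      (\<forall>v\<in>V. finite (L v) \<and> m \<le> card (L v)) \<longrightarrow> (\<exists>f. L_coloring V E L f))"

definition choice_number :: "'v set \<Rightarrow> ('v \<Rightarrow> 'v \<Rightarrow> bool) \<Rightarrow> nat" where
  "choice_number V E = (LEAST m. choosable V E m)"

definition complete_multipartite :: "'v set \<Rightarrow> ('v \<Rightarrow> 'v \<Rightarrow> bool) \<Rightarrow> 'v set set \<Rightarrow> bool" where
  "complete_multipartite V E P \<longleftrightarrow>
     finite V \<and> \<Union>P = V \<and> (\<forall>X\<in>P. X \<noteq> {}) \<and>
     (\<forall>X\<in>P. \<forall>Y\<in>P. X \<noteq> Y \<longrightarrow> X \<inter> Y = {}) \<and>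
     (\<forall>u v. E u v \<longleftrightarrow> u \<in> V \<and> v \<in> V \<and> (\<forall>X\<in>P. \<not> (u \<in> X \<and> v \<in> X)))"

definition num_parts :: "'v set set \<Rightarrow> nat \<Rightarrow> nat" where
  "num_parts P i = card {X\<in>P. card X = i}"

definition good_pair :: "'v set set \<Rightarrow> ('v \<Rightarrow> 'c set) \<Rightarrow> 'v set \<Rightarrow> 'v \<Rightarrow> 'v \<Rightarrow> bool" where
  "good_pair P L A u v \<longleftrightarrow> u \<in> A \<and> v \<in> A \<and> u \<noteq> v \<and>
     ((card A = 3 \<and> real (card (L u \<inter> L v)) \<ge> (real (num_parts P 1) + real (num_parts P 4) + 1) / 3)
      \<or> (card A = 4 \<and> (\<forall>w z. A - {u, v} = {w, z} \<longrightarrow> card (L u \<inter> L v) \<ge> card (L w \<inter> L z))))"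

end

theory Submission
  imports Defs
begin

lemma sdr_exists:
  assumes "finite W" "\<forall>w\<in>W. card (L w) \<ge> card W"
  shows "\<exists>f. inj_on f W \<and> (\<forall>w\<in>W. f w \<in> L w)"
  using assms
proof (induction W arbitrary: L rule: finite_induct)
  case empty then show ?case by auto
next
  case (insert a W)
  have "card (L a) \<ge> Suc (card W)" using insert by auto
  then have "L a \<noteq> {}" by auto
  then obtain c where c: "c \<in> L a" by auto
  have "\<forall>w\<in>W. card (L w - {c}) \<ge> card W"
  proof
    fix w assume "w \<in> W"
    then have "card (L w) \<ge> Suc (card W)" using insert by auto
    moreover have "card (L w) - card {c} \<le> card (L w - {c})"
      by (rule diff_card_le_card_Diff) simp
    ultimately show "card (L w - {c}) \<ge> card W" by simp
  qed
  then obtain f where f: "inj_on f W" "\<forall>w\<in>W. f w \<in> L w - {c}"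
    using insert.IH[of "\<lambda>w. L w - {c}"] by auto
  let ?g = "f(a := c)"
  have "inj_on ?g (insert a W)"
    using f insert.hyps(2) unfolding inj_on_def by (metis DiffE fun_upd_apply insert_iff singletonI)
  moreover have "\<forall>w\<in>insert a W. ?g w \<in> L w" using f c insert.hyps(2) by auto
  ultimately show ?case by blast
qed

lemma choosable_card:
  assumes "finite W" "\<forall>u. \<not> F u u" shows "choosable W F (card W)"
  unfolding choosable_def
proof (intro allI impI)
  fix L :: "'a \<Rightarrow> nat set"
  assume "\<forall>v\<in>W. finite (L v) \<and> card W \<le> card (L v)"
  then obtain f where "inj_on f W" "\<forall>w\<in>W. f w \<in> L w" using sdr_exists[OF assms(1), of L] by auto
  then show "\<exists>f. L_coloring W F L f"
    unfolding L_coloring_def proper_coloring_def inj_on_def using assms(2) by metis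
qed

lemma choosable_mono:
  assumes "choosable W F m" "m \<le> m'" shows "choosable W F m'"
  using assms unfolding choosable_def by (meson order_trans)

theorem lemma23:
  fixes V :: "'v set" and E :: "'v \<Rightarrow> 'v \<Rightarrow> bool" and P :: "'v set set"
    and L :: "'v \<Rightarrow> 'c set" and k n :: nat and A :: "'v set" and u v x :: 'v
  assumes k1: "k \<ge> 1"
    and nk: "n \<ge> 2 * k + 2"
    and G: "complete_multipartite V E P"
    and kparts: "card P = k"
    and nV: "card V = n"
    and Lfin: "\<forall>w\<in>V. finite (L w)"
    and Lsize: "\<forall>w\<in>V. real (card (L w)) \<ge> of_int \<lceil>(real n + real k - 1) / 3\<rceil>"
    and noLcol: "\<not> (\<exists>f. L_coloring V E L f)"
    and union: "card (\<Union>w\<in>V. L w) \<le> n - 1"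
    and minimal: "\<forall>(W :: nat set) F. simple_graph W F \<and> card W < n \<longrightarrow>
        real (choice_number W F) \<le> max (real (chromatic_number W F))
           (of_int \<lceil>(real (card W) + real (chromatic_number W F) - 1) / 3\<rceil>)"
    and A: "A \<in> P" and A3: "card A = 3"
    and gp: "good_pair P L A u v"
    and x: "x \<in> A" "x \<noteq> u" "x \<noteq> v"
  shows "real (card (L x \<union> (L u \<inter> L v))) \<ge>
           real k + real (num_parts P 3) / 3 + real (num_parts P 4)"
proof -
  define s where "s = \<lceil>(real n + real k - 1) / 3\<rceil>"
  from G have finV: "finite V" and UP: "\<Union>P = V" and Pne: "\<forall>X\<in>P. X \<noteq> {}"
    and Pdisj: "\<forall>X\<in>P. \<forall>Y\<in>P. X \<noteq> Y \<longrightarrow> X \<inter> Y = {}"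
    and Edef: "\<And>a b. E a b \<longleftrightarrow> a \<in> V \<and> b \<in> V \<and> (\<forall>X\<in>P. \<not> (a \<in> X \<and> b \<in> X))"
    unfolding complete_multipartite_def by auto
  have AV: "A \<subseteq> V" using A UP by auto
  have finA: "finite A" using AV finV finite_subset by auto
  have finP: "finite P" using kparts k1 card.infinite by force
  have uA: "u \<in> A" and vA: "v \<in> A" and uv: "u \<noteq> v" using gp unfolding good_pair_def by auto
  have Aeq: "A = {u,v,x}"
  proof -
    have "{u,v,x} \<subseteq> A" using uA vA x by auto
    moreover have "card {u,v,x} = 3" using uv x by auto
    ultimately show ?thesis using A3 card_subset_eq finA by metis
  qed
  have nge: "n \<ge> 4" using nk k1 by linarith
  have rn: "real n \<ge> 2 * real k + 2" using nk by linarith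
  have sk: "s \<ge> int k + 1"
  proof -
    have "real k < (real n + real k - 1) / 3" using rn by simp
    then have "int k < s" unfolding s_def by (simp add: less_ceiling_iff)
    then show ?thesis by simp
  qed
  have Eirr: "\<And>a. \<not> E a a" using Edef UP by blast
  have Esym: "\<And>a b. E a b \<Longrightarrow> E b a" using Edef by blast
  have disj: "L x \<inter> (L u \<inter> L v) = {}"
  proof (rule ccontr)
    assume "L x \<inter> (L u \<inter> L v) \<noteq> {}"
    then obtain c where cx: "c \<in> L x" and cu: "c \<in> L u" and cv: "c \<in> L v" by auto
    define V' where "V' = V - A"
    define P' where "P' = P - {A}"
    define W where "W = {0..<n-3::nat}"
    have cardV': "card V' = n - 3" unfolding V'_def using AV A3 nV finA by (simp add: card_Diff_subset)
    obtain h where h: "bij_betw h W V'"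
      using ex_bij_betw_nat_finite[of V'] finV V'_def cardV' W_def by auto
    define F where "F = (\<lambda>i j. i \<in> W \<and> j \<in> W \<and> E (h i) (h j))"
    have sg: "simple_graph W F"
      unfolding simple_graph_def F_def W_def using Eirr Esym by auto
    have cardW: "card W = n - 3" unfolding W_def by simp
    have cardP': "card P' = k - 1" using P'_def A kparts finP by simp
    obtain q where q: "bij_betw q P' {0..<card P'}"
      using ex_bij_betw_finite_nat[of P'] finP P'_def by auto
    define pt where "pt = (\<lambda>w. THE X. X \<in> P \<and> w \<in> X)"
    have pt: "pt w \<in> P \<and> w \<in> pt w" if "w \<in> V" for w
    proof -
      obtain X where X: "X \<in> P" "w \<in> X" using UP \<open>w \<in> V\<close> by auto
      have "\<And>Y. Y \<in> P \<and> w \<in> Y \<Longrightarrow> Y = X" using Pdisj X by blast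
      then show ?thesis unfolding pt_def using X theI[of "\<lambda>Y. Y \<in> P \<and> w \<in> Y" X] by blast
    qed
    have hV': "h i \<in> V'" if "i \<in> W" for i using h that bij_betw_apply by fast
    have ptP': "pt (h i) \<in> P'" if "i \<in> W" for i
    proof -
      have "h i \<in> V" "h i \<notin> A" using hV'[OF that] V'_def by auto
      then show ?thesis using pt[of "h i"] P'_def by auto
    qed
    have col: "colorable W F (k - 1)"
      unfolding colorable_def
    proof (intro exI conjI)
      show "proper_coloring W F (\<lambda>i. q (pt (h i)))"
        unfolding proper_coloring_def
      proof (intro ballI impI)
        fix i j assume ij: "i \<in> W" "j \<in> W" "F i j"
        show "q (pt (h i)) \<noteq> q (pt (h j))"
        proof
          assume "q (pt (h i)) = q (pt (h j))"
          then have "pt (h i) = pt (h j)" using q ptP' ij bij_betw_def inj_on_def by metis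
          moreover have "h i \<in> V" "h j \<in> V" using hV' ij V'_def by auto
          ultimately show False using ij(3) F_def Edef pt by metis
        qed
      qed
      show "(\<lambda>i. q (pt (h i))) ` W \<subseteq> {..<k - 1}"
        using q ptP' cardP' bij_betw_apply by fastforce
    qed
    have chi: "chromatic_number W F \<le> k - 1"
      unfolding chromatic_number_def by (rule Least_le) (rule col)
    have "choosable W F (card W)" by (rule choosable_card) (use sg in \<open>auto simp: W_def simple_graph_def\<close>)
    then have ch: "choosable W F (choice_number W F)"
      unfolding choice_number_def by (rule LeastI)
    have mi: "real (choice_number W F) \<le> max (real (chromatic_number W F))
           (of_int \<lceil>(real (card W) + real (chromatic_number W F) - 1) / 3\<rceil>)"
    proof -
      have "card W < n" using cardW nge by simp
      then show ?thesis using minimal sg by blast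
    qed
    have rchi: "real (chromatic_number W F) \<le> real k - 1" using chi k1 by linarith
    have c1: "real (chromatic_number W F) \<le> of_int s - 1" using rchi sk by linarith
    have "(real (card W) + real (chromatic_number W F) - 1) / 3 \<le> (real n + real k - 1) / 3 - 1"
    proof -
      have "real (card W) = real n - 3" using cardW nge by (simp add: of_nat_diff)
      then show ?thesis using rchi by (simp add: field_simps)
    qed
    then have "\<lceil>(real (card W) + real (chromatic_number W F) - 1) / 3\<rceil> \<le> s - 1"
      unfolding s_def using ceiling_mono ceiling_diff_one by metis
    then have "real_of_int \<lceil>(real (card W) + real (chromatic_number W F) - 1) / 3\<rceil> \<le> of_int s - 1"
      by (metis of_int_1 of_int_diff of_int_le_iff)
    then have "max (real (chromatic_number W F))
           (of_int \<lceil>(real (card W) + real (chromatic_number W F) - 1) / 3\<rceil>) \<le> of_int s - 1"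
      using c1 by (rule max.boundedI[rotated])
    then have chn: "real (choice_number W F) \<le> of_int s - 1" using mi by (rule order_trans[rotated])
    define C where "C = (\<Union>w\<in>V. L w)"
    have finC: "finite C" using C_def finV Lfin by auto
    obtain e where e: "bij_betw e C {0..<card C}" using ex_bij_betw_finite_nat[OF finC] by auto
    have einj: "inj_on e C" using e bij_betw_def by auto
    define L2 where "L2 = (\<lambda>i. e ` (L (h i) - {c}))"
    have "\<forall>i\<in>W. finite (L2 i) \<and> choice_number W F \<le> card (L2 i)"
    proof
      fix i assume i: "i \<in> W"
      then have hiV: "h i \<in> V" using hV' V'_def by auto
      have sub: "L (h i) - {c} \<subseteq> C" using C_def hiV by auto
      have cL2: "card (L2 i) = card (L (h i) - {c})"
        unfolding L2_def by (rule card_image) (rule inj_on_subset[OF einj sub])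
      have "card (L (h i)) - card {c} \<le> card (L (h i) - {c})"
        by (rule diff_card_le_card_Diff) simp
      then have "real (card (L (h i))) - 1 \<le> real (card (L (h i) - {c}))" by simp
      moreover have "real (card (L (h i))) \<ge> of_int s" using Lsize hiV s_def by auto
      ultimately have "real (choice_number W F) \<le> real (card (L2 i))" using chn cL2 by linarith
      then show "finite (L2 i) \<and> choice_number W F \<le> card (L2 i)"
        using Lfin hiV L2_def by simp
    qed
    then obtain f2 where f2: "L_coloring W F L2 f2" using ch unfolding choosable_def by blast
    define f where "f = (\<lambda>w. if w \<in> A then c else inv_into C e (f2 (inv_into W h w)))"
    have out: "inv_into W h w \<in> W \<and> h (inv_into W h w) = w \<and> f w \<in> L w \<and> f w \<noteq> c
        \<and> e (f w) = f2 (inv_into W h w)" if w: "w \<in> V" "w \<notin> A" for w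
    proof -
      have wV': "w \<in> V'" using w V'_def by auto
      have i: "inv_into W h w \<in> W" using h wV' bij_betw_inv_into bij_betw_apply by fast
      have hi: "h (inv_into W h w) = w" using h wV' bij_betw_inv_into_right by fast
      have "f2 (inv_into W h w) \<in> L2 (inv_into W h w)" using f2 i L_coloring_def by blast
      then obtain y where y: "y \<in> L w" "y \<noteq> c" "f2 (inv_into W h w) = e y"
        unfolding L2_def hi by auto
      have yC: "y \<in> C" using y w C_def by auto
      have "f w = y" unfolding f_def using w y yC einj by (simp add: inv_into_f_f)
      then show ?thesis using i hi y by auto
    qed
    have "L_coloring V E L f"
      unfolding L_coloring_def proper_coloring_def
    proof (intro conjI ballI impI)
      fix w assume "w \<in> V"
      then show "f w \<in> L w"
        using out[of w] Aeq cx cu cv f_def by (cases "w \<in> A") auto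
    next
      fix w1 w2 assume w: "w1 \<in> V" "w2 \<in> V" "E w1 w2"
      show "f w1 \<noteq> f w2"
      proof (cases "w1 \<in> A")
        case True
        then have "w2 \<notin> A" using w Edef A by blast
        then show ?thesis using True out[of w2] w f_def by auto
      next
        case False
        note F1 = False
        show ?thesis
        proof (cases "w2 \<in> A")
          case True
          then show ?thesis using F1 out[of w1] w f_def by auto
        next
          case False
          have o1: "inv_into W h w1 \<in> W" "h (inv_into W h w1) = w1" "e (f w1) = f2 (inv_into W h w1)"
            using out[of w1] F1 w by auto
          have o2: "inv_into W h w2 \<in> W" "h (inv_into W h w2) = w2" "e (f w2) = f2 (inv_into W h w2)"
            using out[of w2] False w by auto
          have "F (inv_into W h w1) (inv_into W h w2)" using o1 o2 w F_def by auto
          then have "f2 (inv_into W h w1) \<noteq> f2 (inv_into W h w2)"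
            using f2 o1 o2 unfolding L_coloring_def proper_coloring_def by blast
          then show ?thesis using o1 o2 by metis
        qed
      qed
    qed
    then show False using noLcol by blast
  qed
  have finx: "finite (L x)" and finu: "finite (L u)"
    using Lfin x uA AV by auto
  have cardU: "card (L x \<union> (L u \<inter> L v)) = card (L x) + card (L u \<inter> L v)"
    using disj finx finu by (simp add: card_Un_disjoint)
  have cx: "real (card (L x)) \<ge> (real n + real k - 1) / 3"
  proof -
    have "real (card (L x)) \<ge> of_int s" using Lsize x AV s_def by auto
    moreover have "of_int s \<ge> (real n + real k - 1) / 3" unfolding s_def by (rule le_of_int_ceiling)
    ultimately show ?thesis by linarith
  qed
  have cI: "real (card (L u \<inter> L v)) \<ge> (real (num_parts P 1) + real (num_parts P 4) + 1) / 3"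
  proof -
    have "(card A = 3 \<and> real (card (L u \<inter> L v)) \<ge> (real (num_parts P 1) + real (num_parts P 4) + 1) / 3)
      \<or> (card A = 4 \<and> (\<forall>w z. A - {u, v} = {w, z} \<longrightarrow> card (L u \<inter> L v) \<ge> card (L w \<inter> L z)))"
      using gp unfolding good_pair_def by (elim conjE)
    then show ?thesis using A3 by (elim disjE conjE) simp_all
  qed
  have np: "num_parts P i = (\<Sum>X\<in>P. if card X = i then 1 else 0)" for i
  proof -
    have "num_parts P i = (\<Sum>X\<in>{X\<in>P. card X = i}. 1)" unfolding num_parts_def by (rule card_eq_sum)
    also have "\<dots> = (\<Sum>X\<in>P. if card X = i then 1 else 0)" by (rule sum.inter_filter[OF finP])
    finally show ?thesis .
  qed
  have finX: "finite X" if "X \<in> P" for X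
  proof -
    have "X \<subseteq> V" using UP that by blast
    then show ?thesis using finV by (rule finite_subset)
  qed
  have nsum: "n = (\<Sum>X\<in>P. card X)"
  proof -
    have "pairwise disjnt P" using Pdisj unfolding pairwise_def disjnt_def by blast
    then have "card (\<Union>P) = sum card P" using card_Union_disjoint finX by blast
    then show ?thesis using UP nV by simp
  qed
  have ksum: "k = (\<Sum>X\<in>P. 1)" using kparts by simp
  have pw: "\<And>X. X \<in> P \<Longrightarrow> 2 + (if card X = 3 then 1 else 0) + 2 * (if card X = 4 then 1 else 0)
      \<le> card X + (if card X = (1::nat) then 1 else (0::nat))"
  proof -
    fix X assume "X \<in> P"
    then have "card X \<ge> 1" using Pne finX card_0_eq by fastforce
    then show "2 + (if card X = 3 then 1 else 0) + 2 * (if card X = 4 then 1 else 0)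
      \<le> card X + (if card X = (1::nat) then 1 else (0::nat))" by auto
  qed
  define a3 where "a3 = (\<lambda>X::'v set. if card X = 3 then 1 else (0::nat))"
  define a4 where "a4 = (\<lambda>X::'v set. if card X = 4 then 1 else (0::nat))"
  define a1 where "a1 = (\<lambda>X::'v set. if card X = 1 then 1 else (0::nat))"
  have "(\<Sum>X\<in>P. 2 + a3 X + 2 * a4 X) \<le> (\<Sum>X\<in>P. card X + a1 X)"
    by (rule sum_mono) (unfold a1_def a3_def a4_def, rule pw)
  moreover have "(\<Sum>X\<in>P. 2 + a3 X + 2 * a4 X) = (\<Sum>X\<in>P. 2) + (\<Sum>X\<in>P. a3 X) + 2 * (\<Sum>X\<in>P. a4 X)"
    by (simp only: sum.distrib sum_distrib_left)
  moreover have "(\<Sum>X\<in>P. card X + a1 X) = (\<Sum>X\<in>P. card X) + (\<Sum>X\<in>P. a1 X)"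
    by (simp only: sum.distrib)
  moreover have "(\<Sum>X\<in>P. (2::nat)) = 2 * k" using kparts by simp
  moreover have "num_parts P 3 = (\<Sum>X\<in>P. a3 X)" "num_parts P 4 = (\<Sum>X\<in>P. a4 X)"
    "num_parts P 1 = (\<Sum>X\<in>P. a1 X)" unfolding a1_def a3_def a4_def by (rule np)+
  ultimately have ineq: "2 * k + num_parts P 3 + 2 * num_parts P 4 \<le> n + num_parts P 1"
    using nsum by linarith
  then have "2 * real k + real (num_parts P 3) + 2 * real (num_parts P 4) \<le> real n + real (num_parts P 1)"
    by (metis (mono_tags, lifting) of_nat_add of_nat_le_iff of_nat_mult of_nat_numeral)
  moreover have "real (card (L x \<union> (L u \<inter> L v))) = real (card (L x)) + real (card (L u \<inter> L v))"
    using cardU by simp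
  moreover have "real n + real k - 1 \<le> 3 * real (card (L x))" using cx by (simp add: divide_le_eq mult.commute)
  moreover have "real (num_parts P 1) + real (num_parts P 4) + 1 \<le> 3 * real (card (L u \<inter> L v))" using cI by (simp add: divide_le_eq mult.commute)
  ultimately show ?thesis by linarith
qed

end
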